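(* Let $\mathcal{P}^d=(\mathcal{D},\varphi,\mathcal{E})$ be a trembling-hand problem for $\mathrm{LTL}_f$ planning in a deterministic domain $\mathcal{D}=(S,s_0,A,F_d,L)$, let $\mathcal{M}$ be the MDP constructed from it, let $\mathcal{M}^\times=\mathcal{M}\times Aut_\varphi$ be the product MDP with goal set $G$ (see context). If $\sigma_m^*$ is an optimal strategy of $\mathcal{M}^\times$ for reaching $G$ (i.e., it maximizes the probability of eventually visiting $G$), then the strategy $\sigma_p^*$ on $\mathcal{D}$ defined by $\sigma_p^*(\rho)=\sigma_m^*(\rho^\times)$ for every finite path $\rho$ of $\mathcal{D}$ is an optimal strategy for $\mathcal{P}^d$.
   Context: $\mathrm{LTL}_f$ is linear temporal logic on finite nonempty traces over propositions $Prop$. For $\varphi$ let $Aut_\varphi=(2^{Prop},Q,q_0,\delta,acc)$ be a DFA accepting exactly the finite traces satisfying $\varphi$. A deterministic domain $\mathcal{D}=(S,s_0,A,F_d,L)$: finite states $S$, initial $s_0$, finite actions $A$, applicable actions $A(s)\subseteq A$ (nonempty), successor $F_d(s,a)$ for $a\in A(s)$, labelling $L:S\to2^{Prop}$. Finite paths are alternating sequences $s_0a_0s_1\cdots s_k$ with $a_i\in A(s_i)$; an agent strategy maps finite paths to actions applicable at the last state. Errors $\mathcal{E}=\{err(s,a)\}$: for $s\in S,a\in A(s)$, $err(s,a)$ is a distribution over $A(s)$ (probability of actually instructing $a'$ when intending $a$). Given strategy $\sigma_p$, perturbed paths are sequences $(s_0,a_0,a_0')(s_1,a_1,a_1')\cdots$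 with $a_i=\sigma_p(s_0a_0\cdots a_{i-1}s_i)$, $a_i'$ drawn from $err(s_i,a_i)$, $s_{i+1}=F_d(s_i,a_i')$. $\Pr_{\mathcal{D}}^{\sigma_p,\mathcal{E}}(\varphi)$ is the probability that some $k\ge0$ has $L(s_0)\cdots L(s_k)\models\varphi$; a strategy maximizing it is optimal for $\mathcal{P}^d$. Constructed MDP $\mathcal{M}=(S,s_0,A,\mathcal{T},L)$: same states, actions, applicability and labels as $\mathcal{D}$, with $\mathcal{T}(s,a,s')=\sum_{a'\in A(s):F_d(s,a')=s'}err(s,a)(a')$. Product MDP $\mathcal{M}^\times$: states $S\times Q$, initial state $(s_0,\delta(q_0,L(s_0)))$, actions applicable at $(s,q)$ are $A(s)$, and $\mathcal{T}^\times((s,q),a,(s',q'))=\mathcal{T}(s,a,s')$ if $q'=\delta(q,L(s'))$ and $0$ otherwise. Goal set $G=\{(s,q): q\in acc\}$. Strategies of $\mathcal{M}^\times$ are functions from its finite paths to applicable actions. For a finite path $\rho=s_0a_0s_1\cdots s_k$ of $\mathcal{D}$, $\rho^\times=(s_0,q_0')a_0(s_1,q_1')\cdots(s_k,q_k')$ where $q_0'=\delta(q_0,L(s_0))$ and $q_{i+1}'=\delta(q_i',L(s_{i+1}))$. *)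

theory Defs
  imports "HOL-Probability.Probability"
begin

datatype 'p ltlf =
    TT
  | Atom 'p
  | Neg "'p ltlf"
  | Conj "'p ltlf" "'p ltlf"
  | Nxt "'p ltlf"
  | Until "'p ltlf" "'p ltlf"

fun ltlf_sat_at :: "'p set list \<Rightarrow> nat \<Rightarrow> 'p ltlf \<Rightarrow> bool" where
  "ltlf_sat_at w i TT = True"
| "ltlf_sat_at w i (Atom p) = (p \<in> w ! i)"
| "ltlf_sat_at w i (Neg f) = (\<not> ltlf_sat_at w i f)"
| "ltlf_sat_at w i (Conj f g) = (ltlf_sat_at w i f \<and> ltlf_sat_at w i g)"
| "ltlf_sat_at w i (Nxt f) = (Suc i < length w \<and> ltlf_sat_at w (Suc i) f)"
| "ltlf_sat_at w i (Until f g) =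
     (\<exists>j. i \<le> j \<and> j < length w \<and> ltlf_sat_at w j g \<and>
          (\<forall>k. i \<le> k \<and> k < j \<longrightarrow> ltlf_sat_at w k f))"

definition ltlf_models :: "'p set list \<Rightarrow> 'p ltlf \<Rightarrow> bool" where
  "ltlf_models w \<phi> = (w \<noteq> [] \<and> ltlf_sat_at w 0 \<phi>)"

definition dfa_run :: "('q \<Rightarrow> 'p set \<Rightarrow> 'q) \<Rightarrow> 'q \<Rightarrow> 'p set list \<Rightarrow> 'q" where
  "dfa_run \<delta> q0 w = foldl \<delta> q0 w"

definition is_dfa_for :: "'p set \<Rightarrow> 'q set \<Rightarrow> 'q \<Rightarrow> ('q \<Rightarrow> 'p set \<Rightarrow> 'q) \<Rightarrow> 'q set
    \<Rightarrow> 'p ltlf \<Rightarrow> bool" where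
  "is_dfa_for Prop Q q0 \<delta> acc \<phi> \<longleftrightarrow>
     finite Q \<and> q0 \<in> Q \<and> acc \<subseteq> Q \<and>
     (\<forall>q\<in>Q. \<forall>x\<in>Pow Prop. \<delta> q x \<in> Q) \<and>
     (\<forall>w\<in>lists (Pow Prop). w \<noteq> [] \<longrightarrow> (dfa_run \<delta> q0 w \<in> acc \<longleftrightarrow> ltlf_models w \<phi>))"

definition is_domain :: "'p set \<Rightarrow> 's set \<Rightarrow> 's \<Rightarrow> ('s \<Rightarrow> 'a set) \<Rightarrow> ('s \<Rightarrow> 'a \<Rightarrow> 's)
    \<Rightarrow> ('s \<Rightarrow> 'p set) \<Rightarrow> bool" where
  "is_domain Prop S s0 A F L \<longleftrightarrow>
     finite Prop \<and> finite S \<and> s0 \<in> S \<and>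
     (\<forall>s\<in>S. A s \<noteq> {} \<and> finite (A s) \<and> (\<forall>a\<in>A s. F s a \<in> S) \<and> L s \<subseteq> Prop)"

definition is_errors :: "'s set \<Rightarrow> ('s \<Rightarrow> 'a set) \<Rightarrow> ('s \<Rightarrow> 'a \<Rightarrow> 'a pmf) \<Rightarrow> bool" where
  "is_errors S A err \<longleftrightarrow> (\<forall>s\<in>S. \<forall>a\<in>A s. set_pmf (err s a) \<subseteq> A s)"

text \<open>A finite path x0 a0 x1 ... a(k-1) xk is represented by the history
  [(x0,a0),...,(x(k-1),a(k-1))] together with the last state xk.
  A strategy maps (history, last state) to an action.\<close>

definition is_fpath :: "'x set \<Rightarrow> ('x \<Rightarrow> 'a set) \<Rightarrow> 'x \<Rightarrow> ('x \<times> 'a) list \<Rightarrow> 'x \<Rightarrow> bool" where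
  "is_fpath St Act x0 h x \<longleftrightarrow>
     (\<forall>(y,a)\<in>set h. y \<in> St \<and> a \<in> Act y) \<and> x \<in> St \<and>
     hd (map fst h @ [x]) = x0"

definition valid_strategy :: "'x set \<Rightarrow> ('x \<Rightarrow> 'a set) \<Rightarrow> 'x \<Rightarrow> (('x \<times> 'a) list \<Rightarrow> 'x \<Rightarrow> 'a)
    \<Rightarrow> bool" where
  "valid_strategy St Act x0 \<sigma> \<longleftrightarrow> (\<forall>h x. is_fpath St Act x0 h x \<longrightarrow> \<sigma> h x \<in> Act x)"

text \<open>Probability that, along the perturbed path continuing the history (h, s),
  some prefix of length at most n more steps satisfies phi, given that no earlier
  prefix did (first-hitting recursion). Intended actions are recorded in the history.\<close>
fun th_within :: "('s \<Rightarrow> 'a set) \<Rightarrow> ('s \<Rightarrow> 'a \<Rightarrow> 's) \<Rightarrow> ('s \<Rightarrow> 'p set) \<Rightarrow>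
    ('s \<Rightarrow> 'a \<Rightarrow> 'a pmf) \<Rightarrow> 'p ltlf \<Rightarrow> (('s \<times> 'a) list \<Rightarrow> 's \<Rightarrow> 'a) \<Rightarrow>
    nat \<Rightarrow> ('s \<times> 'a) list \<Rightarrow> 's \<Rightarrow> real" where
  "th_within A F L err \<phi> \<sigma> 0 h s =
     (if ltlf_models (map L (map fst h @ [s])) \<phi> then 1 else 0)"
| "th_within A F L err \<phi> \<sigma> (Suc n) h s =
     (if ltlf_models (map L (map fst h @ [s])) \<phi> then 1
      else (\<Sum>a'\<in>A s. pmf (err s (\<sigma> h s)) a' *
                 th_within A F L err \<phi> \<sigma> n (h @ [(s, \<sigma> h s)]) (F s a')))"

text \<open>Pr(phi) = probability that some k has L(s0)...L(sk) |= phi, i.e. the limit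
  (supremum) of the probabilities of the increasing events "some k <= n".\<close>
definition th_prob :: "'s \<Rightarrow> ('s \<Rightarrow> 'a set) \<Rightarrow> ('s \<Rightarrow> 'a \<Rightarrow> 's) \<Rightarrow> ('s \<Rightarrow> 'p set) \<Rightarrow>
    ('s \<Rightarrow> 'a \<Rightarrow> 'a pmf) \<Rightarrow> 'p ltlf \<Rightarrow> (('s \<times> 'a) list \<Rightarrow> 's \<Rightarrow> 'a) \<Rightarrow> real" where
  "th_prob s0 A F L err \<phi> \<sigma> = (SUP n. th_within A F L err \<phi> \<sigma> n [] s0)"

definition th_optimal :: "'s set \<Rightarrow> 's \<Rightarrow> ('s \<Rightarrow> 'a set) \<Rightarrow> ('s \<Rightarrow> 'a \<Rightarrow> 's) \<Rightarrow> ('s \<Rightarrow> 'p set) \<Rightarrow>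
    ('s \<Rightarrow> 'a \<Rightarrow> 'a pmf) \<Rightarrow> 'p ltlf \<Rightarrow> (('s \<times> 'a) list \<Rightarrow> 's \<Rightarrow> 'a) \<Rightarrow> bool" where
  "th_optimal S s0 A F L err \<phi> \<sigma> \<longleftrightarrow>
     valid_strategy S A s0 \<sigma> \<and>
     (\<forall>\<sigma>'. valid_strategy S A s0 \<sigma>' \<longrightarrow>
        th_prob s0 A F L err \<phi> \<sigma>' \<le> th_prob s0 A F L err \<phi> \<sigma>)"

fun reach_within :: "'x set \<Rightarrow> ('x \<Rightarrow> 'a \<Rightarrow> 'x \<Rightarrow> real) \<Rightarrow> 'x set \<Rightarrow>
    (('x \<times> 'a) list \<Rightarrow> 'x \<Rightarrow> 'a) \<Rightarrow> nat \<Rightarrow> ('x \<times> 'a) list \<Rightarrow> 'x \<Rightarrow> real" where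
  "reach_within St T G \<sigma> 0 h x = (if x \<in> G then 1 else 0)"
| "reach_within St T G \<sigma> (Suc n) h x =
     (if x \<in> G then 1
      else (\<Sum>x'\<in>St. T x (\<sigma> h x) x' * reach_within St T G \<sigma> n (h @ [(x, \<sigma> h x)]) x'))"

definition reach_prob :: "'x set \<Rightarrow> ('x \<Rightarrow> 'a \<Rightarrow> 'x \<Rightarrow> real) \<Rightarrow> 'x \<Rightarrow> 'x set \<Rightarrow>
    (('x \<times> 'a) list \<Rightarrow> 'x \<Rightarrow> 'a) \<Rightarrow> real" where
  "reach_prob St T x0 G \<sigma> = (SUP n. reach_within St T G \<sigma> n [] x0)"

definition reach_optimal :: "'x set \<Rightarrow> ('x \<Rightarrow> 'a set) \<Rightarrow> ('x \<Rightarrow> 'a \<Rightarrow> 'x \<Rightarrow> real) \<Rightarrow> 'x \<Rightarrow>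
    'x set \<Rightarrow> (('x \<times> 'a) list \<Rightarrow> 'x \<Rightarrow> 'a) \<Rightarrow> bool" where
  "reach_optimal St Act T x0 G \<sigma> \<longleftrightarrow>
     valid_strategy St Act x0 \<sigma> \<and>
     (\<forall>\<sigma>'. valid_strategy St Act x0 \<sigma>' \<longrightarrow> reach_prob St T x0 G \<sigma>' \<le> reach_prob St T x0 G \<sigma>)"

definition mdp_T :: "('s \<Rightarrow> 'a set) \<Rightarrow> ('s \<Rightarrow> 'a \<Rightarrow> 's) \<Rightarrow> ('s \<Rightarrow> 'a \<Rightarrow> 'a pmf) \<Rightarrow>
    's \<Rightarrow> 'a \<Rightarrow> 's \<Rightarrow> real" where
  "mdp_T A F err s a s' = (\<Sum>a'\<in>{a'\<in>A s. F s a' = s'}. pmf (err s a) a')"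

definition prod_T :: "('s \<Rightarrow> 'a \<Rightarrow> 's \<Rightarrow> real) \<Rightarrow> ('q \<Rightarrow> 'p set \<Rightarrow> 'q) \<Rightarrow> ('s \<Rightarrow> 'p set) \<Rightarrow>
    ('s \<times> 'q) \<Rightarrow> 'a \<Rightarrow> ('s \<times> 'q) \<Rightarrow> real" where
  "prod_T T \<delta> L x a x' =
     (if snd x' = \<delta> (snd x) (L (fst x')) then T (fst x) a (fst x') else 0)"

definition prod_goal :: "'s set \<Rightarrow> 'q set \<Rightarrow> 'q set \<Rightarrow> ('s \<times> 'q) set" where
  "prod_goal S Q acc = {(s, q). s \<in> S \<and> q \<in> Q \<and> q \<in> acc}"

definition prod_path :: "('q \<Rightarrow> 'p set \<Rightarrow> 'q) \<Rightarrow> 'q \<Rightarrow> ('s \<Rightarrow> 'p set) \<Rightarrow>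
    ('s \<times> 'a) list \<Rightarrow> 's \<Rightarrow> (('s \<times> 'q) \<times> 'a) list \<times> ('s \<times> 'q)" where
  "prod_path \<delta> q0 L h s =
     (let ss = map fst h @ [s];
          qs = (\<lambda>i. dfa_run \<delta> q0 (map L (take (Suc i) ss)))
      in (map (\<lambda>i. ((fst (h ! i), qs i), snd (h ! i))) [0..<length h],
          (s, qs (length h))))"

definition induced_strategy :: "('q \<Rightarrow> 'p set \<Rightarrow> 'q) \<Rightarrow> 'q \<Rightarrow> ('s \<Rightarrow> 'p set) \<Rightarrow>
    ((('s \<times> 'q) \<times> 'a) list \<Rightarrow> ('s \<times> 'q) \<Rightarrow> 'a) \<Rightarrow> ('s \<times> 'a) list \<Rightarrow> 's \<Rightarrow> 'a" where
  "induced_strategy \<delta> q0 L \<sigma>m h s = case_prod \<sigma>m (prod_path \<delta> q0 L h s)"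

end

theory Submission
  imports Defs
begin

lemma dfa_run_snoc: "dfa_run \<delta> q0 (w @ [x]) = \<delta> (dfa_run \<delta> q0 w) x"
  by (simp add: dfa_run_def)

lemma foldl_closed:
  assumes "\<forall>q\<in>Q. \<forall>x\<in>Pow P. \<delta> q x \<in> Q"
  shows "q \<in> Q \<Longrightarrow> set w \<subseteq> Pow P \<Longrightarrow> foldl \<delta> q w \<in> Q"
  using assms by (induction w arbitrary: q) auto

lemma pp_snd: "snd (prod_path \<delta> q0 L h s) = (s, dfa_run \<delta> q0 (map L (map fst h @ [s])))"
  by (simp add: prod_path_def Let_def)

lemma pp_nil: "prod_path \<delta> q0 L [] s = ([], (s, \<delta> q0 (L s)))"
  by (simp add: prod_path_def Let_def dfa_run_def)

lemma pp_snoc_fst: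
  "fst (prod_path \<delta> q0 L (h @ [(s, a)]) s') =
     fst (prod_path \<delta> q0 L h s) @ [(snd (prod_path \<delta> q0 L h s), a)]"
proof -
  have "map (\<lambda>i. ((fst ((h @ [(s, a)]) ! i), dfa_run \<delta> q0 (map L (take (Suc i) (map fst h @ [s, s'])))),
            snd ((h @ [(s, a)]) ! i))) [0..<length h]
      = map (\<lambda>i. ((fst (h ! i), dfa_run \<delta> q0 (map L (take (Suc i) (map fst h @ [s])))),
            snd (h ! i))) [0..<length h]"
    by (rule map_cong) (auto simp: nth_append take_append)
  moreover have "take (Suc (length h)) (map fst h @ [s, s']) = map fst h @ [s]" by simp
  ultimately show ?thesis
    by (simp add: prod_path_def Let_def)
qed

lemma pp_snoc_snd:
  "snd (prod_path \<delta> q0 L (h @ [(s, a)]) s') = (s', \<delta> (snd (snd (prod_path \<delta> q0 L h s))) (L s'))"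
  by (simp add: pp_snd dfa_run_snoc[symmetric])

lemma pp_proj: "map (\<lambda>((s, q), a). (s, a)) (fst (prod_path \<delta> q0 L h s)) = h"
proof (induction h arbitrary: s rule: rev_induct)
  case Nil
  then show ?case by (simp add: pp_nil)
next
  case (snoc x h)
  obtain y a where x: "x = (y, a)" by (cases x)
  show ?case using snoc[of y] by (simp add: x pp_snoc_fst pp_snd)
qed

lemma pp_set:
  "x \<in> set (fst (prod_path \<delta> q0 L h s)) \<Longrightarrow>
   \<exists>i<length h. x = ((fst (h!i), dfa_run \<delta> q0 (map L (take (Suc i) (map fst h @ [s])))), snd (h!i))"
  by (auto simp: prod_path_def Let_def)


lemma sum_prod:
  fixes g :: "'s \<times> 'q \<Rightarrow> real"
  assumes fS: "finite S" and fQ: "finite Q" and fA: "finite (A s)"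
    and FS: "\<forall>a'\<in>A s. F s a' \<in> S" and dQ: "\<forall>s'\<in>S. \<delta> q (L s') \<in> Q"
  shows "(\<Sum>x'\<in>S \<times> Q. prod_T (mdp_T A F err) \<delta> L (s, q) a x' * g x') =
         (\<Sum>a'\<in>A s. pmf (err s a) a' * g (F s a', \<delta> q (L (F s a'))))"
proof -
  have "(\<Sum>x'\<in>S \<times> Q. prod_T (mdp_T A F err) \<delta> L (s, q) a x' * g x') =
        (\<Sum>s'\<in>S. \<Sum>q'\<in>Q. prod_T (mdp_T A F err) \<delta> L (s, q) a (s', q') * g (s', q'))"
    by (simp add: sum.cartesian_product split_def)
  also have "\<dots> = (\<Sum>s'\<in>S. mdp_T A F err s a s' * g (s', \<delta> q (L s')))"
  proof (rule sum.cong[OF refl])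
    fix s' assume s': "s' \<in> S"
    have "(\<Sum>q'\<in>Q. prod_T (mdp_T A F err) \<delta> L (s, q) a (s', q') * g (s', q')) =
          (\<Sum>q'\<in>Q. if q' = \<delta> q (L s') then mdp_T A F err s a s' * g (s', q') else 0)"
      by (rule sum.cong) (auto simp: prod_T_def)
    also have "\<dots> = mdp_T A F err s a s' * g (s', \<delta> q (L s'))"
      using dQ s' fQ by (simp add: sum.delta)
    finally show "(\<Sum>q'\<in>Q. prod_T (mdp_T A F err) \<delta> L (s, q) a (s', q') * g (s', q')) =
          mdp_T A F err s a s' * g (s', \<delta> q (L s'))" .
  qed
  also have "\<dots> = (\<Sum>s'\<in>S. \<Sum>a'\<in>{a'\<in>A s. F s a' = s'}. pmf (err s a) a' * g (F s a', \<delta> q (L (F s a'))))"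
    unfolding mdp_T_def sum_distrib_right
    by (rule sum.cong[OF refl], rule sum.cong[OF refl]) auto
  also have "\<dots> = (\<Sum>a'\<in>A s. pmf (err s a) a' * g (F s a', \<delta> q (L (F s a'))))"
    by (rule sum.group[OF fA fS]) (use FS in auto)
  finally show ?thesis .
qed


lemma goal_equiv:
  assumes dom: "is_domain Prop S s0 A F L" and aut: "is_dfa_for Prop Q q0 \<delta> acc \<phi>"
    and hS: "set (map fst h) \<subseteq> S" and sS: "s \<in> S"
  shows "dfa_run \<delta> q0 (map L (map fst h @ [s])) \<in> Q"
    and "(snd (prod_path \<delta> q0 L h s) \<in> prod_goal S Q acc) = ltlf_models (map L (map fst h @ [s])) \<phi>"
proof -
  have "\<forall>x\<in>set (map fst h @ [s]). L x \<subseteq> Prop"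
    using dom hS sS unfolding is_domain_def by auto
  then have w: "map L (map fst h @ [s]) \<in> lists (Pow Prop)"
    by fastforce
  show Q: "dfa_run \<delta> q0 (map L (map fst h @ [s])) \<in> Q"
    unfolding dfa_run_def
  proof (rule foldl_closed[where P=Prop])
    show "set (map L (map fst h @ [s])) \<subseteq> Pow Prop" using w by (simp only: lists_eq_set mem_Collect_eq)
  qed (use aut in \<open>auto simp: is_dfa_for_def\<close>)
  show "(snd (prod_path \<delta> q0 L h s) \<in> prod_goal S Q acc) = ltlf_models (map L (map fst h @ [s])) \<phi>"
    using aut w Q sS unfolding pp_snd prod_goal_def is_dfa_for_def by auto
qed

lemma main:
  assumes dom: "is_domain Prop S s0 A F L" and aut: "is_dfa_for Prop Q q0 \<delta> acc \<phi>"
  shows "set (map fst h) \<subseteq> S \<Longrightarrow> s \<in> S \<Longrightarrow>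
    th_within A F L err \<phi> (induced_strategy \<delta> q0 L \<tau>) n h s =
    reach_within (S \<times> Q) (prod_T (mdp_T A F err) \<delta> L) (prod_goal S Q acc) \<tau> n
       (fst (prod_path \<delta> q0 L h s)) (snd (prod_path \<delta> q0 L h s))"
proof (induction n arbitrary: h s)
  case 0
  then show ?case using goal_equiv(2)[OF dom aut 0] by simp
next
  case (Suc n)
  define H where "H = fst (prod_path \<delta> q0 L h s)"
  define qq where "qq = dfa_run \<delta> q0 (map L (map fst h @ [s]))"
  have X: "snd (prod_path \<delta> q0 L h s) = (s, qq)" by (simp add: pp_snd qq_def)
  define a where "a = \<tau> H (s, qq)"
  have ind: "induced_strategy \<delta> q0 L \<tau> h s = a"
    unfolding induced_strategy_def a_def H_def using X
    by (metis case_prod_beta prod.collapse)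
  have qQ: "qq \<in> Q" using goal_equiv(1)[OF dom aut Suc.prems] qq_def by simp
  have fin: "finite S" "finite Q" "finite (A s)" "\<forall>a'\<in>A s. F s a' \<in> S"
    using dom aut Suc.prems(2) unfolding is_domain_def is_dfa_for_def by auto
  have dQ: "\<forall>s'\<in>S. \<delta> qq (L s') \<in> Q"
    using dom aut qQ unfolding is_domain_def is_dfa_for_def by auto
  have IH: "th_within A F L err \<phi> (induced_strategy \<delta> q0 L \<tau>) n (h @ [(s, a)]) (F s a') =
     reach_within (S \<times> Q) (prod_T (mdp_T A F err) \<delta> L) (prod_goal S Q acc) \<tau> n
       (H @ [((s, qq), a)]) (F s a', \<delta> qq (L (F s a')))" if "a' \<in> A s" for a'
    using Suc.IH[of "h @ [(s, a)]" "F s a'"] Suc.prems fin(4) that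
    by (simp add: pp_snoc_fst pp_snoc_snd X H_def)
  have G: "((s, qq) \<in> prod_goal S Q acc) = ltlf_models (map L (map fst h @ [s])) \<phi>"
    using goal_equiv(2)[OF dom aut Suc.prems] X by simp
  show ?case
    unfolding H_def[symmetric] X
    using G by (simp add: ind a_def[symmetric] sum_prod[where S=S and Q=Q and A=A and s=s and F=F and q=qq and L=L and \<delta>=\<delta>, OF fin dQ] IH)
qed


lemma dfa_Q:
  assumes dom: "is_domain Prop S s0 A F L" and aut: "is_dfa_for Prop Q q0 \<delta> acc \<phi>"
    and w: "set w \<subseteq> S"
  shows "dfa_run \<delta> q0 (map L w) \<in> Q"
  unfolding dfa_run_def
proof (rule foldl_closed[where P=Prop])
  show "set (map L w) \<subseteq> Pow Prop" using w dom unfolding is_domain_def by auto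
qed (use aut in \<open>auto simp: is_dfa_for_def\<close>)

lemma pp_hd:
  "h \<noteq> [] \<Longrightarrow> hd (fst (prod_path \<delta> q0 L h s)) =
     ((fst (hd h), \<delta> q0 (L (fst (hd h)))), snd (hd h))"
  by (cases h) (auto simp del: upt_Suc simp: prod_path_def Let_def upt_conv_Cons dfa_run_def)

lemma proj_fpath:
  assumes "is_fpath (S \<times> Q) (\<lambda>x. A (fst x)) (s0, q1) H x"
  shows "is_fpath S A s0 (map (\<lambda>((s, q), a). (s, a)) H) (fst x)"
  using assms unfolding is_fpath_def
  by (cases H) (auto simp: split_def)

theorem theorem2:
  fixes Prop :: "'p set" and S :: "'s set" and s0 :: 's and A :: "'s \<Rightarrow> 'a set"
    and F :: "'s \<Rightarrow> 'a \<Rightarrow> 's" and L :: "'s \<Rightarrow> 'p set"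
    and err :: "'s \<Rightarrow> 'a \<Rightarrow> 'a pmf" and \<phi> :: "'p ltlf"
    and Q :: "'q set" and q0 :: 'q and \<delta> :: "'q \<Rightarrow> 'p set \<Rightarrow> 'q" and acc :: "'q set"
    and \<sigma>m :: "(('s \<times> 'q) \<times> 'a) list \<Rightarrow> ('s \<times> 'q) \<Rightarrow> 'a"
  assumes dom: "is_domain Prop S s0 A F L"
    and errs: "is_errors S A err"
    and aut: "is_dfa_for Prop Q q0 \<delta> acc \<phi>"
    and opt: "reach_optimal (S \<times> Q) (\<lambda>x. A (fst x)) (prod_T (mdp_T A F err) \<delta> L)
                (s0, \<delta> q0 (L s0)) (prod_goal S Q acc) \<sigma>m"
  shows "th_optimal S s0 A F L err \<phi> (induced_strategy \<delta> q0 L \<sigma>m)"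
proof -
  have s0S: "s0 \<in> S" using dom by (simp add: is_domain_def)
  have eqp: "th_prob s0 A F L err \<phi> (induced_strategy \<delta> q0 L \<tau>) =
     reach_prob (S \<times> Q) (prod_T (mdp_T A F err) \<delta> L) (s0, \<delta> q0 (L s0)) (prod_goal S Q acc) \<tau>"
    for \<tau>
    unfolding th_prob_def reach_prob_def
    using main[OF dom aut, of "[]" s0 err \<tau>] s0S by (simp add: pp_nil)
  have validm: "valid_strategy (S \<times> Q) (\<lambda>x. A (fst x)) (s0, \<delta> q0 (L s0)) \<sigma>m"
    using opt by (simp add: reach_optimal_def)
  have valid: "valid_strategy S A s0 (induced_strategy \<delta> q0 L \<sigma>m)"
    unfolding valid_strategy_def
  proof (intro allI impI)
    fix h s assume fp: "is_fpath S A s0 h s"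
    have hS: "\<forall>(y, a)\<in>set h. y \<in> S \<and> a \<in> A y" and sS: "s \<in> S"
      and hd: "hd (map fst h @ [s]) = s0"
      using fp by (auto simp: is_fpath_def)
    have ssS: "set (map fst h @ [s]) \<subseteq> S" using hS sS by auto
    have "is_fpath (S \<times> Q) (\<lambda>x. A (fst x)) (s0, \<delta> q0 (L s0))
            (fst (prod_path \<delta> q0 L h s)) (snd (prod_path \<delta> q0 L h s))"
      unfolding is_fpath_def
    proof (intro conjI)
      show "\<forall>(y, a)\<in>set (fst (prod_path \<delta> q0 L h s)). y \<in> S \<times> Q \<and> a \<in> A (fst y)"
      proof (intro ballI, clarify)
        fix y q a assume mem: "((y, q), a) \<in> set (fst (prod_path \<delta> q0 L h s))"
        obtain i where i: "i < length h"
          and e: "((y, q), a) = ((fst (h!i), dfa_run \<delta> q0 (map L (take (Suc i) (map fst h @ [s])))), snd (h!i))"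
          using pp_set[OF mem] by blast
        have "h ! i \<in> set h" using i by simp
        then have "fst (h!i) \<in> S \<and> snd (h!i) \<in> A (fst (h!i))" using hS by auto
        moreover have "dfa_run \<delta> q0 (map L (take (Suc i) (map fst h @ [s]))) \<in> Q"
          by (rule dfa_Q[OF dom aut]) (meson ssS set_take_subset subset_trans)
        ultimately show "(y, q) \<in> S \<times> Q \<and> a \<in> A (fst (y, q))" using e by auto
      qed
      show "snd (prod_path \<delta> q0 L h s) \<in> S \<times> Q"
        using pp_snd dfa_Q[OF dom aut ssS] sS by (simp add: pp_snd)
      show "hd (map fst (fst (prod_path \<delta> q0 L h s)) @ [snd (prod_path \<delta> q0 L h s)]) = (s0, \<delta> q0 (L s0))"
      proof (cases "h = []")
        case True
        then show ?thesis using hd by (simp add: pp_nil)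
      next
        case False
        then have ne: "fst (prod_path \<delta> q0 L h s) \<noteq> []"
          by (simp add: prod_path_def Let_def)
        have "fst (hd h) = s0" using hd False by (cases h) auto
        then show ?thesis using ne pp_hd[OF False, of \<delta> q0 L s] by (simp add: hd_map)
      qed
    qed
    then have "\<sigma>m (fst (prod_path \<delta> q0 L h s)) (snd (prod_path \<delta> q0 L h s)) \<in> A (fst (snd (prod_path \<delta> q0 L h s)))"
      using validm unfolding valid_strategy_def by blast
    then show "induced_strategy \<delta> q0 L \<sigma>m h s \<in> A s"
      by (simp add: induced_strategy_def split_def pp_snd)
  qed
  show ?thesis
    unfolding th_optimal_def
  proof (intro conjI allI impI valid)
    fix \<sigma>' assume v': "valid_strategy S A s0 \<sigma>'"
    define \<tau> :: "(('s \<times> 'q) \<times> 'a) list \<Rightarrow> ('s \<times> 'q) \<Rightarrow> 'a" where "\<tau> = (\<lambda>H x. \<sigma>' (map (\<lambda>((s, q), a). (s, a)) H) (fst x))"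
    have ind: "induced_strategy \<delta> q0 L \<tau> = \<sigma>'"
    proof (intro ext)
      fix h s
      have "induced_strategy \<delta> q0 L \<tau> h s = \<tau> (fst (prod_path \<delta> q0 L h s)) (snd (prod_path \<delta> q0 L h s))"
        by (simp add: induced_strategy_def case_prod_beta)
      also have "\<dots> = \<sigma>' h s" unfolding \<tau>_def pp_proj by (simp add: pp_snd)
      finally show "induced_strategy \<delta> q0 L \<tau> h s = \<sigma>' h s" .
    qed
    have vt: "valid_strategy (S \<times> Q) (\<lambda>x. A (fst x)) (s0, \<delta> q0 (L s0)) \<tau>"
      unfolding valid_strategy_def \<tau>_def
      using v' proj_fpath[of S Q A s0 "\<delta> q0 (L s0)"]
      unfolding valid_strategy_def by blast
    have "th_prob s0 A F L err \<phi> \<sigma>' =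
       reach_prob (S \<times> Q) (prod_T (mdp_T A F err) \<delta> L) (s0, \<delta> q0 (L s0)) (prod_goal S Q acc) \<tau>"
      using eqp[of \<tau>] ind by simp
    also have "\<dots> \<le> reach_prob (S \<times> Q) (prod_T (mdp_T A F err) \<delta> L) (s0, \<delta> q0 (L s0)) (prod_goal S Q acc) \<sigma>m"
      using opt vt unfolding reach_optimal_def by blast
    also have "\<dots> = th_prob s0 A F L err \<phi> (induced_strategy \<delta> q0 L \<sigma>m)"
      using eqp[of \<sigma>m] by simp
    finally show "th_prob s0 A F L err \<phi> \<sigma>' \<le> th_prob s0 A F L err \<phi> (induced_strategy \<delta> q0 L \<sigma>m)" .
  qed
qed

end
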